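(* Let $0<a<b<\infty$, $0<c<d<\infty$, $p,q>-1$ and $\alpha,\beta>0$. If $f:[a,b]\times[c,d]\to\mathbb{R}$ is of bounded variation in the sense of Arzelà, then the mixed Katugampola fractional integral ${}^{(p,q)}_{(a,c)}\mathfrak{I}^{(\alpha,\beta)}f$ is also of bounded variation in the sense of Arzelà on $[a,b]\times[c,d]$.
   Context: For $f:[a,b]\times[c,d]\to\mathbb{R}$ with $0<a<b$, $0<c<d$, real $\alpha,\beta>0$ and $(p,q)\neq(-1,-1)$, the mixed (left-hand sided) Katugampola fractional integral of $f$ is $$\big({}^{(p,q)}_{(a,c)}\mathfrak{I}^{(\alpha,\beta)}f\big)(x,y)=\frac{(p+1)^{1-\alpha}(q+1)^{1-\beta}}{\Gamma(\alpha)\Gamma(\beta)}\int_a^x\int_c^y (x^{p+1}-s^{p+1})^{\alpha-1}(y^{q+1}-t^{q+1})^{\beta-1}s^{p}t^{q}f(s,t)\,\mathrm{d}t\,\mathrm{d}s.$$ A function $f:[a,b]\times[c,d]\to\mathbb{R}$ is of bounded variation in the sense of Arzelà if there is a constant $K$ such that for every $m\in\mathbb{N}$ and all points $a=x_0\le x_1\le\dots\le x_m=b$, $c=y_0\le y_1\le\dots\le y_m=d$, one has $\sum_{i=0}^{m-1}|f(x_{i+1},y_{i+1})-f(x_i,y_i)|\le K$. Equivalently, $f=f_1-f_2$ with $f_1,f_2$ bounded and nondecreasing in each variable separately. *)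

theory Defs
  imports "HOL-Analysis.Analysis"
begin

definition katugampola_mixed ::
  "real \<Rightarrow> real \<Rightarrow> real \<Rightarrow> real \<Rightarrow> real \<Rightarrow> real \<Rightarrow> (real \<Rightarrow> real \<Rightarrow> real) \<Rightarrow> real \<Rightarrow> real \<Rightarrow> real"
where
  "katugampola_mixed p q a c \<alpha> \<beta> f x y =
     (p + 1) powr (1 - \<alpha>) * (q + 1) powr (1 - \<beta>) / (Gamma \<alpha> * Gamma \<beta>) *
     integral {a..x} (\<lambda>s. integral {c..y} (\<lambda>t.
        (x powr (p + 1) - s powr (p + 1)) powr (\<alpha> - 1) *
        (y powr (q + 1) - t powr (q + 1)) powr (\<beta> - 1) *
        s powr p * t powr q * f s t))"

definition arzela_bv ::
  "real \<Rightarrow> real \<Rightarrow> real \<Rightarrow> real \<Rightarrow> (real \<Rightarrow> real \<Rightarrow> real) \<Rightarrow> bool"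
where
  "arzela_bv a b c d f \<longleftrightarrow>
     (\<exists>K. \<forall>(m::nat) (xs::nat \<Rightarrow> real) (ys::nat \<Rightarrow> real).
        xs 0 = a \<and> xs m = b \<and> ys 0 = c \<and> ys m = d \<and>
        (\<forall>i<m. xs i \<le> xs (Suc i) \<and> ys i \<le> ys (Suc i)) \<longrightarrow>
        (\<Sum>i<m. \<bar>f (xs (Suc i)) (ys (Suc i)) - f (xs i) (ys i)\<bar>) \<le> K)"

end

theory Submission
  imports Defs
begin


definition kern :: "real \<Rightarrow> real \<Rightarrow> real \<Rightarrow> real \<Rightarrow> real" where
  "kern p \<alpha> x s = (x powr (p + 1) - s powr (p + 1)) powr (\<alpha> - 1) * s powr p"

lemma kern_nonneg: "0 \<le> kern p \<alpha> x s"
  by (simp add: kern_def)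

lemma kern_has_integral:
  assumes A: "0 < A" "A \<le> x" and p: "p > -1" and al: "\<alpha> > 0"
  shows "(kern p \<alpha> x has_integral (x powr (p+1) - A powr (p+1)) powr \<alpha> / ((p+1)*\<alpha>)) {A..x}"
proof -
  define r where "r = p + 1"
  have r: "r > 0" using p r_def by simp
  define \<Phi> where "\<Phi> s = (x powr r - s powr r) powr \<alpha> * (-1 / (r*\<alpha>))" for s
  have cont: "continuous_on {A..x} \<Phi>"
  proof -
    have c1: "continuous_on {A..x} (\<lambda>s. x powr r - s powr r)"
      using A by (intro continuous_intros) auto
    have c2: "continuous_on {A..x} (\<lambda>s. (x powr r - s powr r) powr \<alpha>)"
      by (rule continuous_on_powr'[OF c1 continuous_on_const]) (use A r al in \<open>auto intro!: powr_mono2\<close>)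
    show ?thesis unfolding \<Phi>_def apply (rule continuous_on_mult_right) using c2 apply simp done
  qed
  have der: "(\<Phi> has_vector_derivative kern p \<alpha> x s) (at s)" if s: "s \<in> {A<..<x}" for s
  proof -
    have s0: "s > 0" "x powr r - s powr r > 0" using s A r by (auto intro!: powr_less_mono2)
    have "(\<Phi> has_real_derivative (\<alpha> * (x powr r - s powr r) powr (\<alpha> - 1) * (- (r * s powr (r - 1)))) * (-1 / (r*\<alpha>))) (at s)"
      unfolding \<Phi>_def using s0
      by (auto intro!: derivative_eq_intros)
    moreover have "(\<alpha> * (x powr r - s powr r) powr (\<alpha> - 1) * (- (r * s powr (r - 1)))) * (-1 / (r*\<alpha>)) = kern p \<alpha> x s"
    proof -
      have gen: "\<And>K S. r*\<alpha> \<noteq> 0 \<Longrightarrow> (\<alpha> * K * (- (r * S))) * (-1 / (r*\<alpha>)) = K*S" by (simp add: field_simps)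
      show ?thesis using gen[of "(x powr r - s powr r) powr (\<alpha> - 1)" "s powr (r-1)"] r al
        by (simp add: kern_def r_def)
    qed
    ultimately show ?thesis by (simp add: has_real_derivative_iff_has_vector_derivative)
  qed
  have "(kern p \<alpha> x has_integral (\<Phi> x - \<Phi> A)) {A..x}"
    by (rule fundamental_theorem_of_calculus_interior[OF A(2) cont der])
  moreover have "\<Phi> x - \<Phi> A = (x powr (p+1) - A powr (p+1)) powr \<alpha> / ((p+1)*\<alpha>)"
    by (simp add: \<Phi>_def r_def)
  ultimately show ?thesis by simp
qed

lemma kern_abs_int:
  assumes "0 < A" "A \<le> x" "p > -1" "\<alpha> > 0"
  shows "kern p \<alpha> x absolutely_integrable_on {A..x}"
  using kern_has_integral[OF assms] kern_nonneg
  by (intro nonnegative_absolutely_integrable_1) auto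

lemma kint_abs_int:
  assumes "0 < A" "A \<le> x" "p > -1" "\<alpha> > 0" and F: "mono_on {A..x} F"
  shows "(\<lambda>s. kern p \<alpha> x s * F s) absolutely_integrable_on {A..x}"
proof -
  have "F \<in> borel_measurable (lebesgue_on {A..x})"
    using integrable_mono_on[OF F] by (rule borel_measurable_integrable)
  moreover have "bounded (F ` {A..x})"
  proof (rule bounded_subset[OF bounded_closed_interval])
    show "F ` {A..x} \<subseteq> {F A..F x}" using F assms(2) by (auto simp: mono_on_def)
  qed
  ultimately have "(\<lambda>s. F s * kern p \<alpha> x s) absolutely_integrable_on {A..x}"
    by (intro absolutely_integrable_bounded_measurable_product_real kern_abs_int assms) auto
  then show ?thesis by (simp add: mult.commute)
qed

lemma kint_integrable:
  assumes "0 < A" "A \<le> x" "p > -1" "\<alpha> > 0" and F: "mono_on {A..x} F"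
  shows "(\<lambda>s. kern p \<alpha> x s * F s) integrable_on {A..x}"
  using kint_abs_int[OF assms] by (rule set_lebesgue_integral_eq_integral(1))

lemma kint_mono:
  assumes A: "0 < A" "A \<le> x" "x \<le> x'" and p: "p > -1" and al: "\<alpha> > 0"
    and F: "mono_on {A..x'} F" and Fnn: "\<And>s. s \<in> {A..x'} \<Longrightarrow> 0 \<le> F s"
  shows "integral {A..x} (\<lambda>s. kern p \<alpha> x s * F s) \<le> integral {A..x'} (\<lambda>s. kern p \<alpha> x' s * F s)"
proof -
  define r where "r = p + 1"
  have r: "r > 0" using p r_def by simp
  define D where "D = x' powr r - x powr r"
  have D: "D \<ge> 0" unfolding D_def using A r by (auto intro!: powr_mono2)
  define \<phi> where "\<phi> s = (s powr r + D) powr (1/r)" for s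
  define g' where "g' s = (1/r) * (s powr r + D) powr (1/r - 1) * (r * s powr (r - 1))" for s
  have pos: "s powr r + D > 0" if "s \<ge> A" for s using that A D by (auto intro!: add_pos_nonneg)
  have phir: "\<phi> s powr r = s powr r + D" if "s \<ge> A" for s
    using pos[OF that] r by (simp add: \<phi>_def powr_powr)
  have phi_x: "\<phi> x = x'"
    using A r by (simp add: \<phi>_def D_def powr_powr)
  have phi_mono: "\<phi> s \<le> \<phi> t" if "A \<le> s" "s \<le> t" for s t
    unfolding \<phi>_def using that A r D by (auto intro!: powr_mono2)
  have phi_smono: "strict_mono_on {A..x} \<phi>"
    unfolding \<phi>_def strict_mono_on_def using A r D
    by (auto intro!: powr_less_mono2 add_pos_nonneg)
  have phi_ge: "s \<le> \<phi> s" if "A \<le> s" for s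
  proof -
    have "s = (s powr r) powr (1/r)" using that A r by (simp add: powr_powr)
    also have "\<dots> \<le> \<phi> s" unfolding \<phi>_def using D r by (auto intro!: powr_mono2)
    finally show ?thesis .
  qed
  have der: "(\<phi> has_real_derivative g' s) (at s within {A..x})" if "s \<in> {A..x}" for s
  proof -
    have s0: "s > 0" "s powr r + D > 0" using that A pos by auto
    show ?thesis unfolding \<phi>_def g'_def
      by (rule has_field_derivative_at_within) (use s0 r in \<open>auto intro!: derivative_eq_intros\<close>)
  qed
  have cont: "continuous_on {A..x} \<phi>"
    unfolding \<phi>_def using A pos by (intro continuous_intros) (auto, metis less_irrefl)
  have g'nn: "g' s \<ge> 0" for s using r by (simp add: g'_def)
  have key: "g' s * \<phi> s powr p = s powr p" if "s \<in> {A..x}" for s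
  proof -
    let ?v = "s powr r + D"
    have v: "?v > 0" using pos that by auto
    have "\<phi> s powr p = ?v powr (p/r)" by (simp add: \<phi>_def powr_powr)
    then have "g' s * \<phi> s powr p = (?v powr (1/r - 1) * ?v powr (p/r)) * s powr (r-1)"
      using r by (simp add: g'_def)
    also have "?v powr (1/r - 1) * ?v powr (p/r) = ?v powr (1/r - 1 + p/r)" by (simp add: powr_add)
    also have "1/r - 1 + p/r = 0" using r by (simp add: r_def field_simps)
    finally show ?thesis using v by (simp add: r_def)
  qed
  define h where "h u = kern p \<alpha> x' u * F u" for u
  have img: "\<phi> ` {A..x} = {\<phi> A..x'}"
  proof
    show "\<phi> ` {A..x} \<subseteq> {\<phi> A..x'}"
      using phi_mono phi_x by (auto simp: image_iff)
    show "{\<phi> A..x'} \<subseteq> \<phi> ` {A..x}"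
    proof
      fix u assume u: "u \<in> {\<phi> A..x'}"
      then obtain s where "A \<le> s" "s \<le> x" "\<phi> s = u"
        using IVT'[of \<phi> A u x] cont A phi_x by auto
      then show "u \<in> \<phi> ` {A..x}" by auto
    qed
  qed
  have phiA: "A \<le> \<phi> A" "\<phi> A \<le> x'" using phi_ge[of A] phi_mono[of A x] phi_x A by auto
  have hint: "h absolutely_integrable_on {\<phi> A..x'}"
    unfolding h_def
    by (rule absolutely_integrable_on_subinterval[OF kint_abs_int[OF A(1) _ p al F]]) (use A phiA in auto)
  have inj: "inj_on \<phi> {A..x}" using phi_smono by (rule strict_mono_on_imp_inj_on)
  have cv: "(\<lambda>s. \<bar>g' s\<bar> * h (\<phi> s)) absolutely_integrable_on {A..x} \<and>
           integral {A..x} (\<lambda>s. \<bar>g' s\<bar> * h (\<phi> s)) = integral {\<phi> A..x'} h"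
  proof -
    have "h absolutely_integrable_on \<phi> ` {A..x} \<and> integral (\<phi> ` {A..x}) h = integral {\<phi> A..x'} h"
      using hint img by simp
    then show ?thesis
      using has_absolute_integral_change_of_variables_1'[of "{A..x}" \<phi> g' h "integral {\<phi> A..x'} h", OF _ der inj]
      by simp
  qed
  have eq: "\<bar>g' s\<bar> * h (\<phi> s) = kern p \<alpha> x s * F (\<phi> s)" if s: "s \<in> {A..x}" for s
  proof -
    have "x' powr (p+1) - \<phi> s powr (p+1) = x powr (p+1) - s powr (p+1)"
      using phir[of s] s by (simp add: r_def[symmetric] D_def)
    then have "\<bar>g' s\<bar> * h (\<phi> s) = (x powr (p+1) - s powr (p+1)) powr (\<alpha> - 1) * (g' s * \<phi> s powr p) * F (\<phi> s)"
      using g'nn[of s] by (simp add: h_def kern_def)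
    then show ?thesis using key[OF s] by (simp add: kern_def)
  qed
  have int2: "(\<lambda>s. kern p \<alpha> x s * F (\<phi> s)) integrable_on {A..x}"
  proof -
    have "(\<lambda>s. \<bar>g' s\<bar> * h (\<phi> s)) integrable_on {A..x}"
      using cv set_lebesgue_integral_eq_integral(1) by blast
    then show ?thesis using integrable_cong[of "{A..x}", OF eq] by simp
  qed
  have I2: "integral {A..x} (\<lambda>s. kern p \<alpha> x s * F (\<phi> s)) = integral {\<phi> A..x'} h"
    using cv integral_cong[of "{A..x}", OF eq] by simp
  have FA: "mono_on {A..x} F" using F A by (auto simp: mono_on_def)
  have "integral {A..x} (\<lambda>s. kern p \<alpha> x s * F s) \<le> integral {A..x} (\<lambda>s. kern p \<alpha> x s * F (\<phi> s))"
  proof (rule integral_le[OF kint_integrable[OF A(1,2) p al FA] int2])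
    fix s assume s: "s \<in> {A..x}"
    have "\<phi> s \<le> x'" using phi_mono[of s x] phi_x s by auto
    then have "F s \<le> F (\<phi> s)" using F s phi_ge[of s] A by (auto simp: mono_on_def)
    then show "kern p \<alpha> x s * F s \<le> kern p \<alpha> x s * F (\<phi> s)"
      by (rule mult_left_mono) (rule kern_nonneg)
  qed
  also have "\<dots> = integral {\<phi> A..x'} h" by (rule I2)
  also have "\<dots> \<le> integral {A..\<phi> A} h + integral {\<phi> A..x'} h"
  proof -
    have "h integrable_on {A..\<phi> A}"
      unfolding h_def
      by (rule integrable_on_subinterval[OF kint_integrable[OF A(1) _ p al F]]) (use A phiA in auto)
    then have "0 \<le> integral {A..\<phi> A} h"
      by (rule integral_nonneg) (use Fnn phiA in \<open>auto simp: h_def intro!: mult_nonneg_nonneg kern_nonneg\<close>)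
    then show ?thesis by simp
  qed
  also have "\<dots> = integral {A..x'} h"
  proof -
    have "h integrable_on {A..x'}" unfolding h_def using kint_integrable[OF A(1) _ p al F] A by simp
    then show ?thesis by (rule Henstock_Kurzweil_Integration.integral_combine[OF phiA])
  qed
  finally show ?thesis unfolding h_def .
qed



definition cmono :: "real \<Rightarrow> real \<Rightarrow> real \<Rightarrow> real \<Rightarrow> (real \<Rightarrow> real \<Rightarrow> real) \<Rightarrow> bool" where
  "cmono a b c d h \<longleftrightarrow> (\<forall>x y x' y'. a \<le> x \<longrightarrow> x \<le> x' \<longrightarrow> x' \<le> b \<longrightarrow> c \<le> y \<longrightarrow> y \<le> y' \<longrightarrow> y' \<le> d \<longrightarrow> h x y \<le> h x' y')"

lemma chain_mono:
  fixes xs :: "nat \<Rightarrow> real"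
  assumes "\<forall>i<m. xs i \<le> xs (Suc i)" "i \<le> j" "j \<le> m"
  shows "xs i \<le> xs j"
  using assms(2,3)
proof (induction j)
  case 0 then show ?case by simp
next
  case (Suc j)
  show ?case
  proof (cases "i = Suc j")
    case False
    then have "xs i \<le> xs j" using Suc by simp
    also have "xs j \<le> xs (Suc j)" using assms(1) Suc by simp
    finally show ?thesis .
  qed simp
qed

lemma bv_of_mono:
  assumes m1: "cmono a b c d g1" and m2: "cmono a b c d g2"
    and eq: "\<And>x y. x \<in> {a..b} \<Longrightarrow> y \<in> {c..d} \<Longrightarrow> g x y = g1 x y - g2 x y"
  shows "arzela_bv a b c d g"
  unfolding arzela_bv_def
proof (intro exI allI impI)
  fix m and xs ys :: "nat \<Rightarrow> real"
  assume H: "xs 0 = a \<and> xs m = b \<and> ys 0 = c \<and> ys m = d \<and> (\<forall>i<m. xs i \<le> xs (Suc i) \<and> ys i \<le> ys (Suc i))"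
  have xm: "\<forall>i<m. xs i \<le> xs (Suc i)" and ym: "\<forall>i<m. ys i \<le> ys (Suc i)" using H by auto
  have xb: "a \<le> xs i \<and> xs i \<le> b" if "i \<le> m" for i
    using chain_mono[OF xm, of 0 i] chain_mono[OF xm, of i m] that H by auto
  have yb: "c \<le> ys i \<and> ys i \<le> d" if "i \<le> m" for i
    using chain_mono[OF ym, of 0 i] chain_mono[OF ym, of i m] that H by auto
  define G1 where "G1 i = g1 (xs i) (ys i)" for i
  define G2 where "G2 i = g2 (xs i) (ys i)" for i
  have trm: "\<bar>g (xs (Suc i)) (ys (Suc i)) - g (xs i) (ys i)\<bar> \<le> (G1 (Suc i) - G1 i) + (G2 (Suc i) - G2 i)"
    if i: "i < m" for i
  proof -
    have b1: "a \<le> xs i" "xs i \<le> xs (Suc i)" "xs (Suc i) \<le> b" "c \<le> ys i" "ys i \<le> ys (Suc i)" "ys (Suc i) \<le> d"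
      using xb[of i] xb[of "Suc i"] yb[of i] yb[of "Suc i"] i xm ym by auto
    have "G1 i \<le> G1 (Suc i)" "G2 i \<le> G2 (Suc i)"
      using m1 m2 b1 unfolding cmono_def G1_def G2_def by blast+
    moreover have "g (xs (Suc i)) (ys (Suc i)) = G1 (Suc i) - G2 (Suc i)" "g (xs i) (ys i) = G1 i - G2 i"
      using eq b1 unfolding G1_def G2_def by auto
    ultimately show ?thesis by linarith
  qed
  have "(\<Sum>i<m. \<bar>g (xs (Suc i)) (ys (Suc i)) - g (xs i) (ys i)\<bar>) \<le> (\<Sum>i<m. (G1 (Suc i) - G1 i) + (G2 (Suc i) - G2 i))"
    by (rule sum_mono) (use trm in auto)
  also have "\<dots> = (G1 m - G1 0) + (G2 m - G2 0)"
    by (simp add: sum.distrib sum_lessThan_telescope)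
  also have "\<dots> = g1 b d - g1 a c + (g2 b d - g2 a c)" using H by (simp add: G1_def G2_def)
  finally show "(\<Sum>i<m. \<bar>g (xs (Suc i)) (ys (Suc i)) - g (xs i) (ys i)\<bar>) \<le> g1 b d - g1 a c + (g2 b d - g2 a c)" .
qed

definition chs :: "(real \<Rightarrow> real \<Rightarrow> real) \<Rightarrow> real \<Rightarrow> real \<Rightarrow> real \<Rightarrow> real \<Rightarrow> real set" where
  "chs f a c x y = {(\<Sum>i<m. \<bar>f (xs (Suc i)) (ys (Suc i)) - f (xs i) (ys i)\<bar>) | m xs ys.
      xs 0 = a \<and> xs m = x \<and> ys 0 = c \<and> ys m = y \<and> (\<forall>i<m. xs i \<le> xs (Suc i) \<and> ys i \<le> ys (Suc i))}"

lemma chs_ext: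
  assumes "v \<in> chs f a c x y" "x \<le> x'" "y \<le> y'"
  shows "v + \<bar>f x' y' - f x y\<bar> \<in> chs f a c x' y'"
proof -
  obtain m xs ys where H: "v = (\<Sum>i<m. \<bar>f (xs (Suc i)) (ys (Suc i)) - f (xs i) (ys i)\<bar>)"
    "xs 0 = a" "xs m = x" "ys 0 = c" "ys m = y" "\<forall>i<m. xs i \<le> xs (Suc i) \<and> ys i \<le> ys (Suc i)"
    using assms(1) unfolding chs_def by blast
  define xs' where "xs' = xs(Suc m := x')"
  define ys' where "ys' = ys(Suc m := y')"
  have "(\<Sum>i<Suc m. \<bar>f (xs' (Suc i)) (ys' (Suc i)) - f (xs' i) (ys' i)\<bar>) = v + \<bar>f x' y' - f x y\<bar>"
  proof -
    have "(\<Sum>i<m. \<bar>f (xs' (Suc i)) (ys' (Suc i)) - f (xs' i) (ys' i)\<bar>) = v"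
      unfolding H(1) by (rule sum.cong) (auto simp: xs'_def ys'_def)
    then show ?thesis using H by (simp add: xs'_def ys'_def)
  qed
  moreover have "xs' 0 = a \<and> xs' (Suc m) = x' \<and> ys' 0 = c \<and> ys' (Suc m) = y' \<and>
      (\<forall>i<Suc m. xs' i \<le> xs' (Suc i) \<and> ys' i \<le> ys' (Suc i))"
    using H assms(2,3) by (auto simp: xs'_def ys'_def less_Suc_eq)
  ultimately show ?thesis unfolding chs_def mem_Collect_eq
    by (intro exI[of _ "Suc m"] exI[of _ xs'] exI[of _ ys']) simp
qed

lemma chs_triv:
  assumes "a \<le> x" "c \<le> y"
  shows "\<bar>f x y - f a c\<bar> \<in> chs f a c x y"
proof -
  define xs where "xs i = (if i = 0 then a else x)" for i :: nat
  define ys where "ys i = (if i = 0 then c else y)" for i :: nat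
  have "(\<Sum>i<Suc 0. \<bar>f (xs (Suc i)) (ys (Suc i)) - f (xs i) (ys i)\<bar>) = \<bar>f x y - f a c\<bar>"
    by (simp add: xs_def ys_def)
  moreover have "xs 0 = a \<and> xs (Suc 0) = x \<and> ys 0 = c \<and> ys (Suc 0) = y \<and>
      (\<forall>i<Suc 0. xs i \<le> xs (Suc i) \<and> ys i \<le> ys (Suc i))"
    using assms by (simp add: xs_def ys_def)
  ultimately show ?thesis unfolding chs_def mem_Collect_eq
    by (intro exI[of _ "Suc 0"] exI[of _ xs] exI[of _ ys]) simp
qed

lemma bv_decomp:
  assumes bv: "arzela_bv a b c d f" and ab: "a \<le> b" and cd: "c \<le> d"
  shows "\<exists>f1 f2. cmono a b c d f1 \<and> cmono a b c d f2 \<and>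
     (\<forall>x\<in>{a..b}. \<forall>y\<in>{c..d}. f x y = f1 x y - f2 x y \<and> 0 \<le> f1 x y \<and> 0 \<le> f2 x y)"
proof -
  obtain K where K: "\<And>m xs ys. xs 0 = a \<and> xs m = b \<and> ys 0 = c \<and> ys m = d \<and>
        (\<forall>i<m. xs i \<le> xs (Suc i) \<and> ys i \<le> ys (Suc i)) \<Longrightarrow>
        (\<Sum>i<m. \<bar>f (xs (Suc i)) (ys (Suc i)) - f (xs i) (ys i)\<bar>) \<le> K"
    using bv unfolding arzela_bv_def by blast
  have Kb: "v \<le> K" if "v \<in> chs f a c b d" for v
    using that K unfolding chs_def by blast
  define V where "V x y = Sup (chs f a c x y)" for x y
  have bdd: "bdd_above (chs f a c x y)" if "x \<le> b" "y \<le> d" for x y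
  proof (rule bdd_aboveI)
    fix v assume "v \<in> chs f a c x y"
    from chs_ext[OF this that] have "v + \<bar>f b d - f x y\<bar> \<le> K" by (rule Kb)
    then show "v \<le> K" by linarith
  qed
  have ne: "chs f a c x y \<noteq> {}" if "a \<le> x" "c \<le> y" for x y
    using chs_triv[OF that] by auto
  have key: "V x y + \<bar>f x' y' - f x y\<bar> \<le> V x' y'"
    if "a \<le> x" "x \<le> x'" "x' \<le> b" "c \<le> y" "y \<le> y'" "y' \<le> d" for x y x' y'
  proof -
    have "V x y \<le> V x' y' - \<bar>f x' y' - f x y\<bar>"
      unfolding V_def
    proof (rule cSup_least[OF ne])
      fix v assume "v \<in> chs f a c x y"
      from chs_ext[OF this, of x' y'] that have "v + \<bar>f x' y' - f x y\<bar> \<in> chs f a c x' y'" by auto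
      then have "v + \<bar>f x' y' - f x y\<bar> \<le> Sup (chs f a c x' y')"
        by (rule cSup_upper) (rule bdd; use that in auto)
      then show "v \<le> Sup (chs f a c x' y') - \<bar>f x' y' - f x y\<bar>" by linarith
    qed (use that in auto)
    then show ?thesis by linarith
  qed
  have V0: "0 \<le> V a c"
  proof -
    have "\<bar>f a c - f a c\<bar> \<in> chs f a c a c" by (rule chs_triv) auto
    then have "\<bar>f a c - f a c\<bar> \<le> V a c" unfolding V_def by (rule cSup_upper) (rule bdd; use ab cd in auto)
    then show ?thesis by simp
  qed
  define f1 where "f1 x y = V x y + \<bar>f a c\<bar>" for x y
  define f2 where "f2 x y = V x y - f x y + \<bar>f a c\<bar>" for x y
  have "cmono a b c d f1" unfolding cmono_def f1_def
  proof (intro allI impI)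
    fix x y x' y' assume "a \<le> x" "x \<le> x'" "x' \<le> b" "c \<le> y" "y \<le> y'" "y' \<le> d"
    from key[OF this] show "V x y + \<bar>f a c\<bar> \<le> V x' y' + \<bar>f a c\<bar>" by linarith
  qed
  moreover have "cmono a b c d f2" unfolding cmono_def f2_def
  proof (intro allI impI)
    fix x y x' y' assume "a \<le> x" "x \<le> x'" "x' \<le> b" "c \<le> y" "y \<le> y'" "y' \<le> d"
    from key[OF this] show "V x y - f x y + \<bar>f a c\<bar> \<le> V x' y' - f x' y' + \<bar>f a c\<bar>" by linarith
  qed
  moreover have "f x y = f1 x y - f2 x y \<and> 0 \<le> f1 x y \<and> 0 \<le> f2 x y" if "x \<in> {a..b}" "y \<in> {c..d}" for x y
  proof -
    have "V a c + \<bar>f x y - f a c\<bar> \<le> V x y" using key[of a x c y] that by auto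
    moreover have "f x y - f a c \<le> \<bar>f x y - f a c\<bar>" "- f a c \<le> \<bar>f a c\<bar>" "0 \<le> \<bar>f x y - f a c\<bar>" by auto
    ultimately show ?thesis using V0 unfolding f1_def f2_def by linarith
  qed
  ultimately show ?thesis by blast
qed



lemma twoD:
  assumes a: "0 < a" "a \<le> b" and c: "0 < c" "c \<le> d" and p: "p > -1" and q: "q > -1"
    and al: "\<alpha> > 0" and be: "\<beta> > 0"
    and hm: "cmono a b c d h" and hnn: "\<forall>x\<in>{a..b}. \<forall>y\<in>{c..d}. 0 \<le> h x y"
  shows "\<And>s y. s \<in> {a..b} \<Longrightarrow> y \<in> {c..d} \<Longrightarrow> (\<lambda>t. kern q \<beta> y t * h s t) integrable_on {c..y}"
    and "\<And>x y. x \<in> {a..b} \<Longrightarrow> y \<in> {c..d} \<Longrightarrow>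
           (\<lambda>s. kern p \<alpha> x s * integral {c..y} (\<lambda>t. kern q \<beta> y t * h s t)) integrable_on {a..x}"
    and "cmono a b c d (\<lambda>x y. integral {a..x} (\<lambda>s. kern p \<alpha> x s * integral {c..y} (\<lambda>t. kern q \<beta> y t * h s t)))"
proof -
  define G where "G s y = integral {c..y} (\<lambda>t. kern q \<beta> y t * h s t)" for s y
  have hmt: "mono_on {c..y} (h s)" if "s \<in> {a..b}" "y \<le> d" for s y
    using hm that unfolding cmono_def mono_on_def by auto
  show ia: "(\<lambda>t. kern q \<beta> y t * h s t) integrable_on {c..y}" if "s \<in> {a..b}" "y \<in> {c..d}" for s y
    using kint_integrable[OF c(1) _ q be hmt[of s y]] that by auto
  have Gnn: "0 \<le> G s y" if "s \<in> {a..b}" "y \<in> {c..d}" for s y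
    unfolding G_def
    by (rule integral_nonneg[OF ia[OF that]]) (use that hnn in \<open>auto intro!: mult_nonneg_nonneg kern_nonneg\<close>)
  have Gs: "G s y \<le> G s' y" if "a \<le> s" "s \<le> s'" "s' \<le> b" "y \<in> {c..d}" for s s' y
    unfolding G_def
  proof (rule integral_le[OF ia ia])
    fix t assume t: "t \<in> {c..y}"
    then have "h s t \<le> h s' t" using hm that unfolding cmono_def by auto
    then show "kern q \<beta> y t * h s t \<le> kern q \<beta> y t * h s' t" by (rule mult_left_mono) (rule kern_nonneg)
  qed (use that in auto)
  have Gy: "G s y \<le> G s y'" if "s \<in> {a..b}" "c \<le> y" "y \<le> y'" "y' \<le> d" for s y y'
    unfolding G_def
    by (rule kint_mono[OF c(1) that(2,3) q be hmt[of s y']]) (use that hnn in auto)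
  have GmS: "mono_on {a..x} (\<lambda>s. G s y)" if "x \<le> b" "y \<in> {c..d}" for x y
    unfolding mono_on_def using Gs that by auto
  show ib: "(\<lambda>s. kern p \<alpha> x s * integral {c..y} (\<lambda>t. kern q \<beta> y t * h s t)) integrable_on {a..x}"
    if "x \<in> {a..b}" "y \<in> {c..d}" for x y
    using kint_integrable[OF a(1) _ p al GmS[of x y]] that unfolding G_def by auto
  show "cmono a b c d (\<lambda>x y. integral {a..x} (\<lambda>s. kern p \<alpha> x s * integral {c..y} (\<lambda>t. kern q \<beta> y t * h s t)))"
    unfolding cmono_def G_def[symmetric]
  proof (intro allI impI)
    fix x y x' y' assume H: "a \<le> x" "x \<le> x'" "x' \<le> b" "c \<le> y" "y \<le> y'" "y' \<le> d"
    have "integral {a..x} (\<lambda>s. kern p \<alpha> x s * G s y) \<le> integral {a..x'} (\<lambda>s. kern p \<alpha> x' s * G s y)"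
      by (rule kint_mono[OF a(1) H(1,2) p al GmS[of x' y]]) (use H Gnn in auto)
    also have "\<dots> \<le> integral {a..x'} (\<lambda>s. kern p \<alpha> x' s * G s y')"
    proof (rule integral_le)
      show "(\<lambda>s. kern p \<alpha> x' s * G s y) integrable_on {a..x'}" using ib[of x' y] H unfolding G_def by auto
      show "(\<lambda>s. kern p \<alpha> x' s * G s y') integrable_on {a..x'}" using ib[of x' y'] H unfolding G_def by auto
      fix s assume "s \<in> {a..x'}"
      then have "G s y \<le> G s y'" using Gy H by auto
      then show "kern p \<alpha> x' s * G s y \<le> kern p \<alpha> x' s * G s y'" by (rule mult_left_mono) (rule kern_nonneg)
    qed
    finally show "integral {a..x} (\<lambda>s. kern p \<alpha> x s * G s y) \<le> integral {a..x'} (\<lambda>s. kern p \<alpha> x' s * G s y')" .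
  qed
qed



theorem mainTheorem3:
  fixes a b c d p q \<alpha> \<beta> :: real and f :: "real \<Rightarrow> real \<Rightarrow> real"
  assumes "0 < a" "a < b" "0 < c" "c < d"
    and "p > -1" "q > -1" "\<alpha> > 0" "\<beta> > 0"
    and "arzela_bv a b c d f"
  shows "arzela_bv a b c d (katugampola_mixed p q a c \<alpha> \<beta> f)"
proof -
  have ab: "a \<le> b" and cd: "c \<le> d" using assms by auto
  obtain f1 f2 where m1: "cmono a b c d f1" and m2: "cmono a b c d f2"
    and dec: "\<And>x y. x \<in> {a..b} \<Longrightarrow> y \<in> {c..d} \<Longrightarrow> f x y = f1 x y - f2 x y \<and> 0 \<le> f1 x y \<and> 0 \<le> f2 x y"
    using bv_decomp[OF assms(9) ab cd] by blast
  have nn1: "\<forall>x\<in>{a..b}. \<forall>y\<in>{c..d}. 0 \<le> f1 x y"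
    and nn2: "\<forall>x\<in>{a..b}. \<forall>y\<in>{c..d}. 0 \<le> f2 x y" using dec by auto
  note T1 = twoD[where h=f1, OF assms(1) ab assms(3) cd assms(5-8) m1 nn1] and T2 = twoD[where h=f2, OF assms(1) ab assms(3) cd assms(5-8) m2 nn2]
  define C where "C = (p + 1) powr (1 - \<alpha>) * (q + 1) powr (1 - \<beta>) / (Gamma \<alpha> * Gamma \<beta>)"
  have C: "0 \<le> C" unfolding C_def using assms(7,8) by (auto intro!: divide_nonneg_pos mult_pos_pos Gamma_real_pos)
  define H where "H h x y = integral {a..x} (\<lambda>s. kern p \<alpha> x s * integral {c..y} (\<lambda>t. kern q \<beta> y t * h s t))" for h x y
  have Hm: "cmono a b c d (\<lambda>x y. C * H h x y)" if "cmono a b c d (H h)" for h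
    using that C unfolding cmono_def by (auto intro: mult_left_mono)
  have eq: "katugampola_mixed p q a c \<alpha> \<beta> f x y = C * H f1 x y - C * H f2 x y" if x: "x \<in> {a..b}" and y: "y \<in> {c..d}" for x y
  proof -
    have inner: "integral {c..y} (\<lambda>t.
        (x powr (p + 1) - s powr (p + 1)) powr (\<alpha> - 1) *
        (y powr (q + 1) - t powr (q + 1)) powr (\<beta> - 1) *
        s powr p * t powr q * f s t) =
       kern p \<alpha> x s * integral {c..y} (\<lambda>t. kern q \<beta> y t * f1 s t) -
       kern p \<alpha> x s * integral {c..y} (\<lambda>t. kern q \<beta> y t * f2 s t)" if s: "s \<in> {a..x}" for s
    proof -
      have sab: "s \<in> {a..b}" using s x by auto
      have "integral {c..y} (\<lambda>t.
        (x powr (p + 1) - s powr (p + 1)) powr (\<alpha> - 1) *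
        (y powr (q + 1) - t powr (q + 1)) powr (\<beta> - 1) *
        s powr p * t powr q * f s t) =
        integral {c..y} (\<lambda>t. kern p \<alpha> x s * (kern q \<beta> y t * f1 s t - kern q \<beta> y t * f2 s t))"
      proof (rule integral_cong)
        fix t assume "t \<in> {c..y}"
        then have ft: "f s t = f1 s t - f2 s t" using dec[OF sab] y by auto
        show "(x powr (p + 1) - s powr (p + 1)) powr (\<alpha> - 1) *
          (y powr (q + 1) - t powr (q + 1)) powr (\<beta> - 1) * s powr p * t powr q * f s t =
          kern p \<alpha> x s * (kern q \<beta> y t * f1 s t - kern q \<beta> y t * f2 s t)"
          unfolding ft kern_def by (simp add: algebra_simps)
      qed
      also have "\<dots> = kern p \<alpha> x s * (integral {c..y} (\<lambda>t. kern q \<beta> y t * f1 s t) - integral {c..y} (\<lambda>t. kern q \<beta> y t * f2 s t))"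
        by (simp add: integral_diff T1(1)[OF sab y] T2(1)[OF sab y])
      finally show ?thesis by (simp add: algebra_simps)
    qed
    have "katugampola_mixed p q a c \<alpha> \<beta> f x y = C * integral {a..x} (\<lambda>s.
       kern p \<alpha> x s * integral {c..y} (\<lambda>t. kern q \<beta> y t * f1 s t) -
       kern p \<alpha> x s * integral {c..y} (\<lambda>t. kern q \<beta> y t * f2 s t))"
      unfolding katugampola_mixed_def C_def by (subst integral_cong[OF inner]) auto
    also have "\<dots> = C * (H f1 x y - H f2 x y)"
      unfolding H_def by (simp add: integral_diff T1(2)[OF x y] T2(2)[OF x y])
    finally show ?thesis by (simp add: algebra_simps)
  qed
  show ?thesis
    by (rule bv_of_mono[OF Hm Hm eq]) (use T1(3) T2(3) in \<open>simp_all add: H_def[abs_def]\<close>)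
qed

end
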